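(* Let $A\subset\mathbb{R}^p$ be compact with $\mathcal{H}_d(A)<\infty$, and let $B\subset A\setminus\mathrm{clos}(A^c_{\rm bi})$ be nonempty and open relative to $A$. For every $\varepsilon>0$ there exists a pairwise disjoint collection $\mathcal{X}_\varepsilon=\{Q_\alpha\}$ of closed sets $Q_\alpha=B[x_\alpha,\rho_\alpha]\cap A$ such that $\mathcal{H}_d(B\setminus\bigcup_{Q_\alpha\in\mathcal{X}_\varepsilon}Q_\alpha)=0$, and such that for each $\alpha$: $\rho_\alpha<\varepsilon$, and there is a bi-Lipschitz map $\varphi_\alpha$ with constant $1+\varepsilon$ mapping $Q_\alpha$ onto $\tilde Q_\alpha:=\varphi_\alpha(Q_\alpha)\subset\mathbb{R}^d$ with $\mathcal{L}_d(\partial\tilde Q_\alpha)=0$ and $\tilde Q_\alpha\supset B[\varphi_\alpha(x_\alpha),\rho_\alpha/(1+\varepsilon)]$. Moreover, for every $\varepsilon>0$ and $\gamma>0$ there is a finite subcollection $\mathcal{X}_{\varepsilon,\gamma}\subset\mathcal{X}_\varepsilon$ with $\mathcal{H}_d(B\setminus\bigcup_{Q_\alpha\in\mathcal{X}_{\varepsilon,\gamma}}Q_\alpha)<\gamma$.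
   Context: $\mathcal{H}_d$ is $d$-dimensional Hausdorff measure; $B[x,r]$ is the closed ball; $\mathcal{L}_d$ is Lebesgue measure on $\mathbb{R}^d$. A map $\varphi$ is bi-Lipschitz with constant $C$ if $C^{-1}|x-y|\le|\varphi(x)-\varphi(y)|\le C|x-y|$. $A$ is $d$-bi-Lipschitz at $x\in A$ if for every $\varepsilon>0$ there are $\delta>0$ and a bi-Lipschitz $\varphi:B(x,\delta)\cap A\to\mathbb{R}^d$ with constant $1+\varepsilon$ whose image is open in $\mathbb{R}^d$; $A_{\rm bi}$ is the set of such $x$, and $A^c_{\rm bi}=A\setminus A_{\rm bi}$. *)

theory Defs
  imports "HOL-Analysis.Analysis"
begin

definition hausdorff_pre :: "nat \<Rightarrow> real \<Rightarrow> 'a::metric_space set \<Rightarrow> ennreal" where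
  "hausdorff_pre d \<delta> E =
     (INF C \<in> {C :: nat \<Rightarrow> 'a set. E \<subseteq> (\<Union>i. C i) \<and> (\<forall>i. bounded (C i) \<and> diameter (C i) \<le> \<delta>)}.
        (\<Sum>i. ennreal (unit_ball_vol (real d) * (diameter (C i) / 2) ^ d)))"

definition hausdorff_measure :: "nat \<Rightarrow> 'a::metric_space set \<Rightarrow> ennreal" where
  "hausdorff_measure d E = (SUP \<delta> \<in> {0<..}. hausdorff_pre d \<delta> E)"

definition bilipschitz_on :: "real \<Rightarrow> 'a::metric_space set \<Rightarrow> ('a \<Rightarrow> 'b::metric_space) \<Rightarrow> bool" where
  "bilipschitz_on C S f \<longleftrightarrow>
     (\<forall>x\<in>S. \<forall>y\<in>S. dist x y / C \<le> dist (f x) (f y) \<and> dist (f x) (f y) \<le> C * dist x y)"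

text \<open>A is d-bi-Lipschitz at x, where d = DIM('d) is the dimension of the target space 'd.\<close>
definition bi_lipschitz_point ::
    "'d::euclidean_space itself \<Rightarrow> 'p::euclidean_space set \<Rightarrow> 'p \<Rightarrow> bool" where
  "bi_lipschitz_point TYPE('d) A x \<longleftrightarrow>
     x \<in> A \<and> (\<forall>\<epsilon>>0. \<exists>\<delta>>0. \<exists>\<phi> :: 'p \<Rightarrow> 'd.
        bilipschitz_on (1 + \<epsilon>) (ball x \<delta> \<inter> A) \<phi> \<and> open (\<phi> ` (ball x \<delta> \<inter> A)))"

definition A_bi :: "'d::euclidean_space itself \<Rightarrow> 'p::euclidean_space set \<Rightarrow> 'p set" where
  "A_bi TYPE('d) A = {x \<in> A. bi_lipschitz_point TYPE('d) A x}"

definition A_bi_c :: "'d::euclidean_space itself \<Rightarrow> 'p::euclidean_space set \<Rightarrow> 'p set" where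
  "A_bi_c TYPE('d) A = A - A_bi TYPE('d) A"

end

theory Submission
  imports Defs
begin


definition hc :: "nat \<Rightarrow> 'a::metric_space set \<Rightarrow> ennreal" where
  "hc d S = ennreal (unit_ball_vol (real d) * (diameter S / 2) ^ d)"

definition covs :: "real \<Rightarrow> 'a::metric_space set \<Rightarrow> (nat \<Rightarrow> 'a set) set" where
  "covs \<delta> E = {C. E \<subseteq> (\<Union>i. C i) \<and> (\<forall>i. bounded (C i) \<and> diameter (C i) \<le> \<delta>)}"

lemma hpre_def2: "hausdorff_pre d \<delta> E = (INF C \<in> covs \<delta> E. (\<Sum>i. hc d (C i)))"
  by (simp add: hausdorff_pre_def covs_def hc_def)

lemma hpre_le: "C \<in> covs \<delta> E \<Longrightarrow> hausdorff_pre d \<delta> E \<le> (\<Sum>i. hc d (C i))"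
  unfolding hpre_def2 by (rule INF_lower)

lemma covs_mono: "E \<subseteq> F \<Longrightarrow> \<delta> \<le> \<delta>' \<Longrightarrow> covs \<delta> F \<subseteq> covs \<delta>' E"
  by (auto simp: covs_def) (meson order_trans)+

lemma hpre_mono: "E \<subseteq> F \<Longrightarrow> \<delta> \<le> \<delta>' \<Longrightarrow> hausdorff_pre d \<delta>' E \<le> hausdorff_pre d \<delta> F"
  unfolding hpre_def2 by (rule INF_superset_mono[OF covs_mono]) auto

lemma hpre_le_H: "0 < \<delta> \<Longrightarrow> hausdorff_pre d \<delta> E \<le> hausdorff_measure d E"
  unfolding hausdorff_measure_def by (rule SUP_upper) auto

lemma H_le_iff: "hausdorff_measure d E \<le> x \<longleftrightarrow> (\<forall>\<delta>>0. hausdorff_pre d \<delta> E \<le> x)"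
  unfolding hausdorff_measure_def by (auto simp: SUP_le_iff)

lemma H_mono: "E \<subseteq> F \<Longrightarrow> hausdorff_measure d E \<le> hausdorff_measure d F"
  unfolding H_le_iff by (meson hpre_le_H hpre_mono order_refl order_trans)

lemma hpre_close:
  assumes "hausdorff_pre d \<delta> E < x"
  obtains C where "C \<in> covs \<delta> E" "(\<Sum>i. hc d (C i)) < x"
  using assms unfolding hpre_def2 by (auto simp: INF_less_iff)

lemma hpre_subadd:
  "hausdorff_pre d \<delta> (\<Union>n. E n) \<le> (\<Sum>n. hausdorff_pre d \<delta> (E n))"
proof (rule ennreal_le_epsilon)
  fix e :: real assume "0 < e" "(\<Sum>n. hausdorff_pre d \<delta> (E n)) < top"
  then have *: "\<And>n. hausdorff_pre d \<delta> (E n) < hausdorff_pre d \<delta> (E n) + e * (1/2)^Suc n"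
    by (auto simp add: less_top dest!: ennreal_suminf_lessD)
  have "\<exists>C. C \<in> covs \<delta> (E n) \<and> (\<Sum>i. hc d (C i)) \<le> hausdorff_pre d \<delta> (E n) + e * (1/2)^Suc n" for n
    by (rule hpre_close[OF *[of n]]) (auto intro: less_imp_le)
  then obtain B where B: "\<And>n. B n \<in> covs \<delta> (E n)"
    and Ble: "\<And>n. (\<Sum>i. hc d (B n i)) \<le> hausdorff_pre d \<delta> (E n) + e * (1/2)^Suc n"
    by metis
  define C where "C = case_prod B o prod_decode"
  have "C \<in> covs \<delta> (\<Union>n. E n)"
    using B unfolding covs_def C_def
    apply (auto simp: subset_eq split: prod.splits)
    by (metis prod.case prod_encode_inverse)
  then have "hausdorff_pre d \<delta> (\<Union>n. E n) \<le> (\<Sum>i. hc d (C i))" by (rule hpre_le)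
  also have "\<dots> = (\<Sum>n. \<Sum>i. hc d (B n i))"
    unfolding C_def comp_def by (intro suminf_ennreal_2dimen) auto
  also have "\<dots> \<le> (\<Sum>n. hausdorff_pre d \<delta> (E n) + e * (1/2) ^ Suc n)"
    by (intro suminf_le allI Ble) auto
  also have "... = (\<Sum>n. hausdorff_pre d \<delta> (E n)) + (\<Sum>n. ennreal e * ennreal ((1/2) ^ Suc n))"
    using \<open>0 < e\<close> by (subst suminf_add[symmetric])
                       (auto simp del: ennreal_suminf_cmult simp add: ennreal_mult[symmetric])
  also have "\<dots> = (\<Sum>n. hausdorff_pre d \<delta> (E n)) + e"
    unfolding ennreal_suminf_cmult
    by (subst suminf_ennreal_eq[OF zero_le_power power_half_series]) auto
  finally show "hausdorff_pre d \<delta> (\<Union>n. E n) \<le> (\<Sum>n. hausdorff_pre d \<delta> (E n)) + e" .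
qed

lemma H_subadd:
  "hausdorff_measure d (\<Union>n. E n) \<le> (\<Sum>n. hausdorff_measure d (E n))"
  unfolding H_le_iff
proof safe
  fix \<delta> :: real assume "0 < \<delta>"
  have "hausdorff_pre d \<delta> (\<Union>n. E n) \<le> (\<Sum>n. hausdorff_pre d \<delta> (E n))" by (rule hpre_subadd)
  also have "\<dots> \<le> (\<Sum>n. hausdorff_measure d (E n))"
    by (intro suminf_le allI hpre_le_H \<open>0<\<delta>\<close>) auto
  finally show "hausdorff_pre d \<delta> (\<Union>n. E n) \<le> (\<Sum>n. hausdorff_measure d (E n))" .
qed

lemma H_empty: assumes "d > 0" shows "hausdorff_measure d ({}::'a::metric_space set) = 0"
proof -
  have "hausdorff_pre d \<delta> ({}::'a set) = 0" if "\<delta> > 0" for \<delta>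
  proof -
    have "(\<lambda>i. {}) \<in> covs \<delta> ({}::'a set)" using that by (auto simp: covs_def)
    from hpre_le[OF this, of d] show ?thesis using assms by (simp add: hc_def power_0_left)
  qed
  then show ?thesis unfolding hausdorff_measure_def by simp
qed

lemma diameter_le_metric:
  fixes S :: "'a::metric_space set"
  assumes "0 \<le> D" "\<And>x y. x \<in> S \<Longrightarrow> y \<in> S \<Longrightarrow> dist x y \<le> D"
  shows "diameter S \<le> D"
  using assms unfolding diameter_def by (auto intro!: cSUP_least)

lemma lip_image_diam:
  fixes f :: "'a::metric_space \<Rightarrow> 'b::metric_space"
  assumes L: "0 < L" and lip: "\<forall>x\<in>E. \<forall>y\<in>E. dist (f x) (f y) \<le> L * dist x y"
    and C: "bounded C"
  shows "bounded (f ` (C \<inter> E))" "diameter (f ` (C \<inter> E)) \<le> L * diameter C"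
proof -
  have *: "dist (f x) (f y) \<le> L * diameter C" if "x \<in> C \<inter> E" "y \<in> C \<inter> E" for x y
  proof -
    have "dist (f x) (f y) \<le> L * dist x y" using lip that by auto
    also have "\<dots> \<le> L * diameter C"
      using diameter_bounded_bound[OF C, of x y] that L by auto
    finally show ?thesis .
  qed
  show "bounded (f ` (C \<inter> E))"
  proof (cases "C \<inter> E = {}")
    case False
    then obtain z where "z \<in> C \<inter> E" by auto
    then show ?thesis unfolding bounded_def using * by blast
  qed auto
  show "diameter (f ` (C \<inter> E)) \<le> L * diameter C"
    apply (rule diameter_le_metric)
    using L diameter_ge_0[OF C] * by auto
qed

lemma hpre_lip:
  fixes f :: "'a::metric_space \<Rightarrow> 'b::metric_space"
  assumes L: "0 < L" and lip: "\<forall>x\<in>E. \<forall>y\<in>E. dist (f x) (f y) \<le> L * dist x y"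
  shows "hausdorff_pre d (L * \<delta>) (f ` E) \<le> ennreal (L ^ d) * hausdorff_pre d \<delta> E"
proof -
  have main: "hausdorff_pre d (L * \<delta>) (f ` E) \<le> ennreal (L ^ d) * (\<Sum>i. hc d (C i))"
    if C: "C \<in> covs \<delta> E" for C
  proof -
    define D where "D i = f ` (C i \<inter> E)" for i
    have Cb: "bounded (C i)" "diameter (C i) \<le> \<delta>" for i using C by (auto simp: covs_def)
    have Db: "bounded (D i)" "diameter (D i) \<le> L * diameter (C i)" for i
      unfolding D_def using lip_image_diam[OF L lip Cb(1)] by auto
    have "D \<in> covs (L * \<delta>) (f ` E)"
    proof -
      have "f ` E \<subseteq> (\<Union>i. D i)" using C unfolding covs_def D_def by blast
      moreover have "diameter (D i) \<le> L * \<delta>" for i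
        using Db(2)[of i] mult_left_mono[OF Cb(2)[of i], of L] L by linarith
      ultimately show ?thesis using Db(1) by (auto simp: covs_def)
    qed
    then have "hausdorff_pre d (L * \<delta>) (f ` E) \<le> (\<Sum>i. hc d (D i))" by (rule hpre_le)
    also have "\<dots> \<le> (\<Sum>i. ennreal (L ^ d) * hc d (C i))"
    proof (intro suminf_le allI)
      fix i
      have "0 \<le> diameter (D i)" by (rule diameter_ge_0[OF Db(1)])
      then have "(diameter (D i) / 2) ^ d \<le> (L * diameter (C i) / 2) ^ d"
        using Db(2)[of i] by (intro power_mono) auto
      also have "\<dots> = L ^ d * (diameter (C i) / 2) ^ d" by (simp add: power_mult_distrib[symmetric])
      finally have 1: "(diameter (D i) / 2) ^ d \<le> L ^ d * (diameter (C i) / 2) ^ d" .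
      have v: "0 \<le> unit_ball_vol (real d)" by simp
      have "unit_ball_vol (real d) * (diameter (D i) / 2) ^ d \<le> unit_ball_vol (real d) * (L ^ d * (diameter (C i) / 2) ^ d)"
        by (rule mult_left_mono[OF 1 v])
      also have "\<dots> = L ^ d * (unit_ball_vol (real d) * (diameter (C i) / 2) ^ d)"
        by (simp only: mult_ac)
      finally have 2: "unit_ball_vol (real d) * (diameter (D i) / 2) ^ d \<le> L ^ d * (unit_ball_vol (real d) * (diameter (C i) / 2) ^ d)" .
      have 3: "0 \<le> unit_ball_vol (real d) * (diameter (C i) / 2) ^ d"
        using diameter_ge_0[OF Cb(1)[of i]] by simp
      have "hc d (D i) \<le> ennreal (L ^ d * (unit_ball_vol (real d) * (diameter (C i) / 2) ^ d))"
        unfolding hc_def by (rule ennreal_leI[OF 2])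
      also have "\<dots> = ennreal (L ^ d) * hc d (C i)"
        unfolding hc_def using L 3 by (intro ennreal_mult) auto
      finally show "hc d (D i) \<le> ennreal (L ^ d) * hc d (C i)" .
    qed auto
    also have "\<dots> = ennreal (L ^ d) * (\<Sum>i. hc d (C i))" by simp
    finally show ?thesis .
  qed
  show ?thesis
  proof (cases "hausdorff_pre d \<delta> E = top")
    case True then show ?thesis using L by (simp add: ennreal_mult_top)
  next
    case False
    show ?thesis
    proof (rule ennreal_le_epsilon)
      fix e :: real assume e: "0 < e"
      have "hausdorff_pre d \<delta> E < hausdorff_pre d \<delta> E + e / L ^ d"
        using False e L by (simp add: less_top ennreal_less_iff)
      then obtain C where C: "C \<in> covs \<delta> E" "(\<Sum>i. hc d (C i)) < hausdorff_pre d \<delta> E + e / L ^ d"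
        by (rule hpre_close)
      have "hausdorff_pre d (L * \<delta>) (f ` E) \<le> ennreal (L ^ d) * (\<Sum>i. hc d (C i))" by (rule main[OF C(1)])
      also have "\<dots> \<le> ennreal (L ^ d) * (hausdorff_pre d \<delta> E + e / L ^ d)"
        using C(2) by (intro mult_left_mono) auto
      also have "\<dots> = ennreal (L ^ d) * hausdorff_pre d \<delta> E + ennreal (L ^ d) * ennreal (e / L ^ d)"
        by (rule distrib_left)
      also have "ennreal (L ^ d) * ennreal (e / L ^ d) = ennreal (L ^ d * (e / L ^ d))"
        using L e by (intro ennreal_mult[symmetric]) auto
      also have "L ^ d * (e / L ^ d) = e" using L by simp
      finally show "hausdorff_pre d (L * \<delta>) (f ` E) \<le> ennreal (L ^ d) * hausdorff_pre d \<delta> E + e" .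
    qed
  qed
qed

lemma H_lip:
  fixes f :: "'a::metric_space \<Rightarrow> 'b::metric_space"
  assumes L: "0 < L" and lip: "\<forall>x\<in>E. \<forall>y\<in>E. dist (f x) (f y) \<le> L * dist x y"
  shows "hausdorff_measure d (f ` E) \<le> ennreal (L ^ d) * hausdorff_measure d E"
  unfolding H_le_iff
proof safe
  fix \<delta> :: real assume "0 < \<delta>"
  have "hausdorff_pre d \<delta> (f ` E) = hausdorff_pre d (L * (\<delta> / L)) (f ` E)" using L by simp
  also have "\<dots> \<le> ennreal (L ^ d) * hausdorff_pre d (\<delta> / L) E" by (rule hpre_lip[OF L lip])
  also have "\<dots> \<le> ennreal (L ^ d) * hausdorff_measure d E"
    using \<open>0<\<delta>\<close> L by (intro mult_left_mono hpre_le_H) auto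
  finally show "hausdorff_pre d \<delta> (f ` E) \<le> ennreal (L ^ d) * hausdorff_measure d E" .
qed

lemma hc_empty: "d > 0 \<Longrightarrow> hc d {} = 0"
  by (simp add: hc_def power_0_left)

lemma hpre_sep:
  assumes d: "d > 0" and r: "0 < \<delta>" "\<delta> < r"
    and sep: "\<forall>x\<in>E. \<forall>y\<in>F. r \<le> dist x y"
  shows "hausdorff_pre d \<delta> E + hausdorff_pre d \<delta> F \<le> hausdorff_pre d \<delta> (E \<union> F)"
proof (cases "hausdorff_pre d \<delta> (E \<union> F) = top")
  case True then show ?thesis by simp
next
  case False
  show ?thesis
  proof (rule ennreal_le_epsilon)
    fix e :: real assume e: "0 < e"
    have "hausdorff_pre d \<delta> (E \<union> F) < hausdorff_pre d \<delta> (E \<union> F) + e"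
      using False e by (simp add: less_top ennreal_less_iff)
    then obtain C where C: "C \<in> covs \<delta> (E \<union> F)" "(\<Sum>i. hc d (C i)) < hausdorff_pre d \<delta> (E \<union> F) + e"
      by (rule hpre_close)
    define CE where "CE i = (if C i \<inter> E = {} then {} else C i)" for i
    define CF where "CF i = (if C i \<inter> F = {} then {} else C i)" for i
    have CE: "CE \<in> covs \<delta> E" and CF: "CF \<in> covs \<delta> F"
      using C(1) r unfolding covs_def CE_def CF_def by (auto simp: subset_eq) blast+
    have one: "hc d (CE i) + hc d (CF i) \<le> hc d (C i)" for i
    proof (cases "C i \<inter> E = {} \<or> C i \<inter> F = {}")
      case True then show ?thesis unfolding CE_def CF_def using d by (auto simp: hc_empty)
    next
      case False
      then obtain x y where xy: "x \<in> C i" "x \<in> E" "y \<in> C i" "y \<in> F" by auto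
      have "bounded (C i)" "diameter (C i) \<le> \<delta>" using C(1) by (auto simp: covs_def)
      then have "dist x y \<le> \<delta>" using diameter_bounded_bound[of "C i" x y] xy by auto
      moreover have "r \<le> dist x y" using sep xy by auto
      ultimately show ?thesis using r by auto
    qed
    have "hausdorff_pre d \<delta> E + hausdorff_pre d \<delta> F \<le> (\<Sum>i. hc d (CE i)) + (\<Sum>i. hc d (CF i))"
      by (intro add_mono hpre_le CE CF)
    also have "\<dots> = (\<Sum>i. hc d (CE i) + hc d (CF i))" by (rule suminf_add) auto
    also have "\<dots> \<le> (\<Sum>i. hc d (C i))" by (intro suminf_le allI one) auto
    also have "\<dots> \<le> hausdorff_pre d \<delta> (E \<union> F) + e" using C(2) by simp
    finally show "hausdorff_pre d \<delta> E + hausdorff_pre d \<delta> F \<le> hausdorff_pre d \<delta> (E \<union> F) + e" .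
  qed
qed

lemma H_sep:
  assumes d: "d > 0" and r: "0 < r"
    and sep: "\<forall>x\<in>E. \<forall>y\<in>F. r \<le> dist x y"
  shows "hausdorff_measure d E + hausdorff_measure d F \<le> hausdorff_measure d (E \<union> F)"
proof -
  have ne: "{0::real<..} \<noteq> {}" by auto
  have "hausdorff_measure d E + hausdorff_measure d F
      = (SUP \<delta>2\<in>{0<..}. SUP \<delta>1\<in>{0<..}. hausdorff_pre d \<delta>1 E + hausdorff_pre d \<delta>2 F)"
    unfolding hausdorff_measure_def
    by (simp add: ennreal_SUP_add_left[OF ne, symmetric] ennreal_SUP_add_right[OF ne])
  also have "\<dots> \<le> hausdorff_measure d (E \<union> F)"
  proof (intro SUP_least)
    fix \<delta>2 \<delta>1 :: real assume "\<delta>2 \<in> {0<..}" "\<delta>1 \<in> {0<..}"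
    define \<delta> where "\<delta> = min (min \<delta>1 \<delta>2) (r/2)"
    have \<delta>: "0 < \<delta>" "\<delta> < r" "\<delta> \<le> \<delta>1" "\<delta> \<le> \<delta>2"
      using \<open>\<delta>1 \<in> _\<close> \<open>\<delta>2 \<in> _\<close> r by (auto simp: \<delta>_def)
    have "hausdorff_pre d \<delta>1 E + hausdorff_pre d \<delta>2 F \<le> hausdorff_pre d \<delta> E + hausdorff_pre d \<delta> F"
      using \<delta> by (intro add_mono hpre_mono) auto
    also have "\<dots> \<le> hausdorff_pre d \<delta> (E \<union> F)" by (rule hpre_sep[OF d \<delta>(1,2) sep])
    also have "\<dots> \<le> hausdorff_measure d (E \<union> F)" by (rule hpre_le_H[OF \<delta>(1)])
    finally show "hausdorff_pre d \<delta>1 E + hausdorff_pre d \<delta>2 F \<le> hausdorff_measure d (E \<union> F)" .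
  qed
  finally show ?thesis .
qed

lemma H_compact_disj:
  fixes E F :: "'a::heine_borel set"
  assumes d: "d > 0" and "compact E" "compact F" "E \<inter> F = {}"
  shows "hausdorff_measure d E + hausdorff_measure d F \<le> hausdorff_measure d (E \<union> F)"
proof -
  obtain r where "r > 0" "\<forall>x\<in>E. \<forall>y\<in>F. r \<le> dist x y"
    using separate_compact_closed[of E F] assms compact_imp_closed by blast
  then show ?thesis using H_sep[OF d] by blast
qed

lemma H_finite_disj:
  fixes Q :: "'i \<Rightarrow> 'a::heine_borel set"
  assumes d: "d > 0" and "finite I" and cQ: "\<And>i. i \<in> I \<Longrightarrow> compact (Q i)"
    and disj: "\<And>i j. i \<in> I \<Longrightarrow> j \<in> I \<Longrightarrow> i \<noteq> j \<Longrightarrow> Q i \<inter> Q j = {}"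
  shows "(\<Sum>i\<in>I. hausdorff_measure d (Q i)) \<le> hausdorff_measure d (\<Union>i\<in>I. Q i)"
  using assms(2,3,4)
proof (induction I rule: finite_induct)
  case empty then show ?case by simp
next
  case (insert j I)
  have "(\<Sum>i\<in>insert j I. hausdorff_measure d (Q i)) = hausdorff_measure d (Q j) + (\<Sum>i\<in>I. hausdorff_measure d (Q i))"
    using insert by simp
  also have "\<dots> \<le> hausdorff_measure d (Q j) + hausdorff_measure d (\<Union>i\<in>I. Q i)"
    using insert by (intro add_left_mono) auto
  also have "\<dots> \<le> hausdorff_measure d (Q j \<union> (\<Union>i\<in>I. Q i))"
    using insert by (intro H_compact_disj d compact_UN) auto
  finally show ?case by simp
qed

lemma H_null_negligible:
  fixes E :: "'a::euclidean_space set"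
  assumes "hausdorff_measure DIM('a) E = 0"
  shows "negligible E"
  unfolding negligible_outer
proof safe
  fix e :: real assume e: "0 < e"
  let ?d = "DIM('a)"
  have "hausdorff_pre ?d 1 E \<le> 0" using hpre_le_H[of 1 ?d E] assms by simp
  then have "hausdorff_pre ?d 1 E < ennreal (e / 2^?d)" using e by (simp add: le_zero_eq)
  then obtain C where C: "C \<in> covs 1 E" "(\<Sum>i. hc ?d (C i)) < ennreal (e / 2^?d)" by (rule hpre_close)
  define T where "T i = (if C i \<inter> E = {} then {} else cball (SOME p. p \<in> C i \<inter> E) (diameter (C i)))" for i
  have ET: "E \<subseteq> (\<Union>i. T i)"
  proof
    fix x assume "x \<in> E"
    then obtain i where "x \<in> C i" using C(1) by (auto simp: covs_def)
    let ?p = "SOME p. p \<in> C i \<inter> E"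
    have p: "?p \<in> C i \<inter> E" using \<open>x\<in>C i\<close> \<open>x\<in>E\<close> by (metis (mono_tags) IntI someI)
    have "dist ?p x \<le> diameter (C i)" using C(1) p \<open>x\<in>C i\<close> by (auto simp: covs_def intro!: diameter_bounded_bound)
    then have "x \<in> T i" using p \<open>x\<in>C i\<close> \<open>x\<in>E\<close> by (auto simp: T_def)
    then show "x \<in> (\<Union>i. T i)" by auto
  qed
  have Tm: "T i \<in> sets lebesgue" for i by (auto simp: T_def intro: fmeasurableD)
  have Tle: "emeasure lebesgue (T i) \<le> ennreal (2^?d) * hc ?d (C i)" for i
  proof (cases "C i \<inter> E = {}")
    case True then show ?thesis by (simp add: T_def)
  next
    case False
    have dg: "0 \<le> diameter (C i)" using C(1) by (auto simp: covs_def intro: diameter_ge_0)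
    have "emeasure lebesgue (T i) = ennreal (unit_ball_vol ?d * diameter (C i) ^ ?d)"
      using False dg by (simp add: T_def emeasure_cball)
    also have "unit_ball_vol ?d * diameter (C i) ^ ?d = 2^?d * (unit_ball_vol (real ?d) * (diameter (C i)/2)^?d)"
      by (simp add: power_divide)
    also have "ennreal \<dots> = ennreal (2^?d) * hc ?d (C i)" unfolding hc_def using dg by (intro ennreal_mult) auto
    finally show ?thesis by simp
  qed
  have "emeasure lebesgue (\<Union>i. T i) \<le> (\<Sum>i. emeasure lebesgue (T i))"
    using Tm by (intro emeasure_subadditive_countably) auto
  also have "\<dots> \<le> (\<Sum>i. ennreal (2^?d) * hc ?d (C i))" by (intro suminf_le allI Tle) auto
  also have "\<dots> = ennreal (2^?d) * (\<Sum>i. hc ?d (C i))" by simp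
  also have "\<dots> < ennreal (2^?d) * ennreal (e / 2^?d)" using C(2) by (intro ennreal_mult_strict_left_mono) auto
  also have "\<dots> = ennreal (2^?d * (e / 2^?d))" using e by (intro ennreal_mult[symmetric]) auto
  also have "2^?d * (e / 2^?d) = e" by simp
  finally have lt: "emeasure lebesgue (\<Union>i. T i) < ennreal e" .
  have m: "(\<Union>i. T i) \<in> sets lebesgue" using Tm by auto
  have f: "(\<Union>i. T i) \<in> lmeasurable" using m lt by (intro fmeasurableI) (auto simp: less_top[symmetric] intro: order.strict_trans)
  have "measure lebesgue (\<Union>i. T i) < e"
  proof -
    have "ennreal (measure lebesgue (\<Union>i. T i)) < ennreal e" using lt emeasure_eq_measure2[OF f] by simp
    then show ?thesis using ennreal_less_iff[of "measure lebesgue (\<Union>i. T i)" e] by simp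
  qed
  then show "\<exists>T. E \<subseteq> T \<and> T \<in> lmeasurable \<and> measure lebesgue T < e"
    using ET f by blast
qed

lemma ennreal_pos_inverse:
  fixes x :: ennreal assumes "0 < x" shows "\<exists>n. ennreal (1 / real (Suc n)) < x"
proof (cases x)
  case (real r)
  then have "r > 0" using assms by simp
  then obtain n where "inverse (real (Suc n)) < r" using reals_Archimedean by blast
  then show ?thesis using real \<open>r>0\<close> by (intro exI[of _ n]) (simp add: ennreal_less_iff divide_inverse)
next
  case top then show ?thesis by (auto intro: exI[of _ 0])
qed

lemma sphere_bad_countable:
  fixes A :: "'a::euclidean_space set"
  assumes cA: "closed A" and hA: "hausdorff_measure d A < \<infinity>" and d: "d > 0"
  shows "countable {\<rho>. hausdorff_measure d (A \<inter> sphere x \<rho>) \<noteq> 0}"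
proof -
  let ?g = "\<lambda>\<rho>. hausdorff_measure d (A \<inter> sphere x \<rho>)"
  obtain h where h: "hausdorff_measure d A = ennreal h" "0 \<le> h"
    using hA by (cases "hausdorff_measure d A") auto
  define S where "S n = {\<rho>. ennreal (1 / real (Suc n)) < ?g \<rho>}" for n
  have fin: "finite (S n)" for n
  proof (rule ccontr)
    assume "infinite (S n)"
    define k where "k = Suc (nat \<lceil>real (Suc n) * h\<rceil>)"
    obtain F where F: "finite F" "card F = k" "F \<subseteq> S n"
      using infinite_arbitrarily_large[OF \<open>infinite (S n)\<close>] by blast
    have "(\<Sum>\<rho>\<in>F. ennreal (1 / real (Suc n))) \<le> (\<Sum>\<rho>\<in>F. ?g \<rho>)"
      using F(3) by (intro sum_mono) (auto simp: S_def less_imp_le)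
    also have "\<dots> \<le> hausdorff_measure d (\<Union>\<rho>\<in>F. A \<inter> sphere x \<rho>)"
      using F(1) cA by (intro H_finite_disj d) (auto intro: closed_Int_compact)
    also have "\<dots> \<le> hausdorff_measure d A" by (rule H_mono) auto
    finally have "of_nat k * ennreal (1 / real (Suc n)) \<le> ennreal h" using F(2) h by simp
    then have "ennreal (real k * (1 / real (Suc n))) \<le> ennreal h"
      by (simp add: ennreal_of_nat_eq_real_of_nat ennreal_mult[symmetric])
    then have "real k * (1 / real (Suc n)) \<le> h" using h(2) by simp
    then have "real k \<le> real (Suc n) * h" by (simp add: field_simps)
    moreover have "real (Suc n) * h < real k" unfolding k_def by linarith
    ultimately show False by simp
  qed
  have "{\<rho>. ?g \<rho> \<noteq> 0} \<subseteq> (\<Union>n. S n)"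
    using ennreal_pos_inverse by (auto simp: S_def zero_less_iff_neq_zero[symmetric])
  moreover have "countable (\<Union>n. S n)" using fin by (auto intro: countable_finite)
  ultimately show ?thesis by (rule countable_subset)
qed

lemma sphere_good:
  fixes A :: "'a::euclidean_space set"
  assumes cA: "closed A" and hA: "hausdorff_measure d A < \<infinity>" and d: "d > 0" and b: "0 < b"
  shows "\<exists>\<rho>. 0 < \<rho> \<and> \<rho> < b \<and> hausdorff_measure d (A \<inter> sphere x \<rho>) = 0"
proof (rule ccontr)
  assume "\<not> ?thesis"
  then have "{0<..<b} \<subseteq> {\<rho>. hausdorff_measure d (A \<inter> sphere x \<rho>) \<noteq> 0}" by auto
  then have "countable {0<..<b}" using sphere_bad_countable[OF cA hA d] countable_subset by blast
  then show False using uncountable_open_interval[of 0 b] b by simp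
qed



lemma bl_upper: "bilipschitz_on L U \<phi> \<Longrightarrow> a \<in> U \<Longrightarrow> b \<in> U \<Longrightarrow> dist (\<phi> a) (\<phi> b) \<le> L * dist a b"
  by (simp add: bilipschitz_on_def)

lemma bl_lower: "bilipschitz_on L U \<phi> \<Longrightarrow> 0 < L \<Longrightarrow> a \<in> U \<Longrightarrow> b \<in> U \<Longrightarrow> dist a b \<le> L * dist (\<phi> a) (\<phi> b)"
  unfolding bilipschitz_on_def by (auto simp: field_simps)

lemma bl_mono:
  assumes "bilipschitz_on L U \<phi>" "0 < L" "L \<le> L'" "V \<subseteq> U"
  shows "bilipschitz_on L' V \<phi>"
  unfolding bilipschitz_on_def
proof safe
  fix a b assume ab: "a \<in> V" "b \<in> V"
  then have "a \<in> U" "b \<in> U" using assms by auto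
  then have 1: "dist a b / L \<le> dist (\<phi> a) (\<phi> b)" "dist (\<phi> a) (\<phi> b) \<le> L * dist a b"
    using assms(1) by (auto simp: bilipschitz_on_def)
  have "dist a b / L' \<le> dist a b / L" using assms by (intro divide_left_mono) auto
  then show "dist a b / L' \<le> dist (\<phi> a) (\<phi> b)" using 1 by linarith
  have "L * dist a b \<le> L' * dist a b" using assms by (intro mult_right_mono) auto
  then show "dist (\<phi> a) (\<phi> b) \<le> L' * dist a b" using 1 by linarith
qed

lemma lip_cont:
  assumes "0 < L" "\<forall>a\<in>S. \<forall>b\<in>S. dist (f a) (f b) \<le> L * dist a b"
  shows "continuous_on S f"
  unfolding continuous_on_iff
proof safe
  fix a e assume "a \<in> S" "(0::real) < e"
  show "\<exists>\<delta>>0. \<forall>x'\<in>S. dist x' a < \<delta> \<longrightarrow> dist (f x') (f a) < e"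
  proof (intro exI[of _ "e / L"] conjI ballI impI)
    show "0 < e / L" using assms \<open>0<e\<close> by auto
    fix x' assume "x' \<in> S" "dist x' a < e / L"
    then have "dist (f x') (f a) \<le> L * dist x' a" using assms \<open>a\<in>S\<close> by auto
    also have "\<dots> < L * (e / L)" using \<open>dist x' a < e / L\<close> assms by (intro mult_strict_left_mono) auto
    also have "\<dots> = e" using assms by simp
    finally show "dist (f x') (f a) < e" .
  qed
qed

lemma H_bl_inv:
  assumes bl: "bilipschitz_on L U \<phi>" and L: "0 < L" and E: "E \<subseteq> U"
  shows "hausdorff_measure d E \<le> ennreal (L ^ d) * hausdorff_measure d (\<phi> ` E)"
proof -
  have inj: "inj_on \<phi> U"
    unfolding inj_on_def using bl_lower[OF bl L] by fastforce
  let ?\<psi> = "inv_into U \<phi>"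
  have inv: "?\<psi> (\<phi> z) = z" if "z \<in> U" for z using inj that by simp
  have "?\<psi> ` (\<phi> ` E) = E" using E inv by (force simp: image_image)
  moreover have "\<forall>a\<in>\<phi> ` E. \<forall>b\<in>\<phi> ` E. dist (?\<psi> a) (?\<psi> b) \<le> L * dist a b"
  proof (intro ballI)
    fix a b assume "a \<in> \<phi> ` E" "b \<in> \<phi> ` E"
    then obtain a' b' where "a' \<in> E" "b' \<in> E" "a = \<phi> a'" "b = \<phi> b'" by auto
    then show "dist (?\<psi> a) (?\<psi> b) \<le> L * dist a b"
    proof -
      have U: "a' \<in> U" "b' \<in> U" using E \<open>a' \<in> E\<close> \<open>b' \<in> E\<close> by auto
      show ?thesis using inv[OF U(1)] inv[OF U(2)] bl_lower[OF bl L U] \<open>a = _\<close> \<open>b = _\<close> by simp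
    qed
  qed
  ultimately show ?thesis using H_lip[OF L, of "\<phi> ` E" ?\<psi> d] by simp
qed

lemma open_image_ball:
  fixes \<phi> :: "'a::metric_space \<Rightarrow> 'b::metric_space"
  assumes bl: "bilipschitz_on L (ball x \<delta> \<inter> A) \<phi>" and L: "0 < L"
    and op: "open (\<phi> ` (ball x \<delta> \<inter> A))" and r: "r \<le> \<delta>"
  shows "open (\<phi> ` (ball x r \<inter> A))"
  unfolding open_contains_ball
proof
  fix y assume "y \<in> \<phi> ` (ball x r \<inter> A)"
  then obtain z where z: "z \<in> ball x r" "z \<in> A" "y = \<phi> z" by auto
  have zU: "z \<in> ball x \<delta> \<inter> A" using z r by auto
  obtain e where e: "e > 0" "ball y e \<subseteq> \<phi> ` (ball x \<delta> \<inter> A)"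
    using op zU z(3) unfolding open_contains_ball by blast
  define e' where "e' = min e ((r - dist x z) / L)"
  have e': "0 < e'" using e z L by (auto simp: e'_def)
  show "\<exists>e>0. ball y e \<subseteq> \<phi> ` (ball x r \<inter> A)"
  proof (intro exI[of _ e'] conjI subsetI e')
    fix y' assume y': "y' \<in> ball y e'"
    then have "y' \<in> \<phi> ` (ball x \<delta> \<inter> A)" using e by (auto simp: e'_def)
    then obtain z' where z': "z' \<in> ball x \<delta> \<inter> A" "y' = \<phi> z'" by auto
    have "dist z z' \<le> L * dist y y'" using bl_lower[OF bl L zU z'(1)] z z' by simp
    also have "\<dots> < L * e'" using y' L by (intro mult_strict_left_mono) auto
    also have "\<dots> \<le> L * ((r - dist x z) / L)" using L by (intro mult_left_mono) (auto simp: e'_def)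
    also have "\<dots> = r - dist x z" using L by simp
    finally have "dist x z' < r" using dist_triangle[of x z' z] by linarith
    then show "y' \<in> \<phi> ` (ball x r \<inter> A)" using z' by auto
  qed
qed

lemma H_cball_scale:
  fixes c :: "'a::real_normed_vector"
  assumes k: "0 < k"
  shows "hausdorff_measure d (cball c (k * s)) \<le> ennreal (k ^ d) * hausdorff_measure d (cball c s)"
proof -
  define g where "g y = c + k *\<^sub>R (y - c)" for y
  have "cball c (k * s) \<subseteq> g ` cball c s"
  proof
    fix y assume y: "y \<in> cball c (k * s)"
    have "g (c + (1/k) *\<^sub>R (y - c)) = y" using k by (simp add: g_def)
    moreover have "c + (1/k) *\<^sub>R (y - c) \<in> cball c s"
    proof -
      have "dist c (c + (1/k) *\<^sub>R (y - c)) = (1/k) * dist c y"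
        using k by (simp add: dist_norm norm_minus_commute)
      also have "\<dots> \<le> (1/k) * (k * s)" using y k by (intro mult_left_mono) auto
      also have "\<dots> = s" using k by simp
      finally show ?thesis by simp
    qed
    ultimately show "y \<in> g ` cball c s" by (metis image_eqI)
  qed
  then have "hausdorff_measure d (cball c (k * s)) \<le> hausdorff_measure d (g ` cball c s)" by (rule H_mono)
  also have "\<dots> \<le> ennreal (k ^ d) * hausdorff_measure d (cball c s)"
  proof (rule H_lip[OF k])
    show "\<forall>a\<in>cball c s. \<forall>b\<in>cball c s. dist (g a) (g b) \<le> k * dist a b"
      using k by (auto simp: g_def dist_norm scaleR_diff_right[symmetric])
  qed
  finally show ?thesis .
qed

context
  fixes A :: "'p::euclidean_space set" and \<phi> :: "'p \<Rightarrow> 'd::euclidean_space"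
    and x :: 'p and L \<epsilon> r \<delta> :: real
  assumes cA: "closed A" and xA: "x \<in> A" and L: "1 \<le> L" "L < 1+\<epsilon>" "L \<le> 2"
    and r: "0 < r" "5*r < \<delta>"
    and bl: "bilipschitz_on L (ball x \<delta> \<inter> A) \<phi>" and op: "open (\<phi> ` (ball x \<delta> \<inter> A))"
begin

lemma L0: "0 < L" using L by simp

lemma subU: "cball x r \<inter> A \<subseteq> ball x \<delta> \<inter> A" using r by auto

lemma K_compact: "compact (\<phi> ` (cball x r \<inter> A))"
proof -
  have "continuous_on (ball x \<delta> \<inter> A) \<phi>"
    using lip_cont[OF L0] bl_upper[OF bl] by blast
  then have "continuous_on (cball x r \<inter> A) \<phi>" using subU continuous_on_subset by blast
  moreover have "compact (cball x r \<inter> A)" using cA by (intro compact_Int_closed) auto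
  ultimately show ?thesis by (rule compact_continuous_image)
qed

lemma O_open: "open (\<phi> ` (ball x r \<inter> A))"
  using open_image_ball[OF bl L0 op, of r] r by auto

lemma chart_bl: "bilipschitz_on (1+\<epsilon>) (cball x r \<inter> A) \<phi>"
  using bl_mono[OF bl L0 _ subU] L by auto

lemma chart_front: "frontier (\<phi> ` (cball x r \<inter> A)) \<subseteq> \<phi> ` (A \<inter> sphere x r)"
proof
  let ?K = "\<phi> ` (cball x r \<inter> A)"
  fix y assume y: "y \<in> frontier ?K"
  then have "y \<in> ?K" "y \<notin> interior ?K"
    using K_compact compact_imp_closed closure_closed by (auto simp: frontier_def)
  then obtain z where z: "z \<in> cball x r" "z \<in> A" "y = \<phi> z" by auto
  have "\<phi> ` (ball x r \<inter> A) \<subseteq> interior ?K"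
    using O_open by (intro interior_maximal) auto
  have "z \<notin> ball x r"
  proof
    assume "z \<in> ball x r"
    then have "\<phi> z \<in> \<phi> ` (ball x r \<inter> A)" using z(2) by blast
    then show False using z(3) \<open>y \<notin> interior ?K\<close> \<open>\<phi> ` (ball x r \<inter> A) \<subseteq> interior ?K\<close> by blast
  qed
  then show "y \<in> \<phi> ` (A \<inter> sphere x r)" using z by auto
qed

lemma chart_ball:
  assumes s: "0 \<le> s" "s * L < r"
  shows "cball (\<phi> x) s \<subseteq> \<phi> ` (cball x r \<inter> A)"
proof -
  let ?K = "\<phi> ` (cball x r \<inter> A)" and ?O = "\<phi> ` (ball x r \<inter> A)"
  have "cball (\<phi> x) s \<subseteq> ?O"
  proof (rule ccontr)
    assume "\<not> cball (\<phi> x) s \<subseteq> ?O"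
    then have "cball (\<phi> x) s - ?O \<noteq> {}" by auto
    moreover have "cball (\<phi> x) s \<inter> ?O \<noteq> {}"
    proof -
      have "x \<in> ball x r \<inter> A" using xA r by simp
      then have "\<phi> x \<in> ?O" by blast
      moreover have "\<phi> x \<in> cball (\<phi> x) s" using s by simp
      ultimately show ?thesis by blast
    qed
    ultimately obtain y where y: "y \<in> cball (\<phi> x) s" "y \<in> frontier ?O"
      using connected_Int_frontier[of "cball (\<phi> x) s" ?O] by auto
    have "closure ?O \<subseteq> ?K"
      using K_compact compact_imp_closed by (intro closure_minimal) auto
    then have "y \<in> ?K" "y \<notin> ?O" using y O_open by (auto simp: frontier_def interior_open)
    then obtain z where z0: "z \<in> cball x r" "z \<in> A" "y = \<phi> z" by auto
    have "z \<notin> ball x r" using \<open>y \<notin> ?O\<close> z0 by blast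
    note z = z0 this
    have "x \<in> ball x \<delta> \<inter> A" "z \<in> ball x \<delta> \<inter> A" using xA z subU r by auto
    then have "dist x z \<le> L * dist (\<phi> x) (\<phi> z)" by (rule bl_lower[OF bl L0])
    also have "\<dots> \<le> L * s" using y z L0 by (intro mult_left_mono) auto
    finally have "dist x z < r" using s by (simp add: mult.commute)
    then show False using z by auto
  qed
  then show ?thesis by auto
qed

lemma chart_dbl:
  "hausdorff_measure d (cball x (5*r) \<inter> A) \<le> ennreal (120^d) * hausdorff_measure d (cball x r \<inter> A)"
proof -
  let ?E5 = "cball x (5*r) \<inter> A" and ?Q = "cball x r \<inter> A" and ?y = "\<phi> x"
  have E5U: "?E5 \<subseteq> ball x \<delta> \<inter> A" using r by auto
  have xU: "x \<in> ball x \<delta> \<inter> A" using xA r by auto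
  have 1: "hausdorff_measure d ?E5 \<le> ennreal (L^d) * hausdorff_measure d (\<phi> ` ?E5)"
    by (rule H_bl_inv[OF bl L0 E5U])
  have "\<phi> ` ?E5 \<subseteq> cball ?y (30 * (r/3))"
  proof
    fix w assume "w \<in> \<phi> ` ?E5"
    then obtain z where z: "z \<in> ?E5" "w = \<phi> z" by auto
    have zU: "z \<in> ball x \<delta> \<inter> A" using z(1) E5U by blast
    have "dist ?y w \<le> L * dist x z" using bl_upper[OF bl xU zU] z(2) by simp
    also have "\<dots> \<le> 2 * (5 * r)" using L z r by (intro mult_mono) auto
    finally show "w \<in> cball ?y (30 * (r/3))" by simp
  qed
  then have "hausdorff_measure d (\<phi> ` ?E5) \<le> hausdorff_measure d (cball ?y (30 * (r/3)))" by (rule H_mono)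
  also have "\<dots> \<le> ennreal (30^d) * hausdorff_measure d (cball ?y (r/3))"
    by (rule H_cball_scale) simp
  finally have 2: "hausdorff_measure d (\<phi> ` ?E5) \<le> ennreal (30^d) * hausdorff_measure d (cball ?y (r/3))" .
  have "cball ?y (r/3) \<subseteq> \<phi> ` ?Q" using r L by (intro chart_ball) auto
  then have "hausdorff_measure d (cball ?y (r/3)) \<le> hausdorff_measure d (\<phi> ` ?Q)" by (rule H_mono)
  also have "\<dots> \<le> ennreal (L^d) * hausdorff_measure d ?Q"
  proof (rule H_lip[OF L0])
    show "\<forall>a\<in>?Q. \<forall>b\<in>?Q. dist (\<phi> a) (\<phi> b) \<le> L * dist a b"
    proof (intro ballI)
      fix a b assume "a \<in> ?Q" "b \<in> ?Q"
      then have "a \<in> ball x \<delta> \<inter> A" "b \<in> ball x \<delta> \<inter> A" using subU by blast+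
      then show "dist (\<phi> a) (\<phi> b) \<le> L * dist a b" by (rule bl_upper[OF bl])
    qed
  qed
  finally have 3: "hausdorff_measure d (cball ?y (r/3)) \<le> ennreal (L^d) * hausdorff_measure d ?Q" .
  have Ld: "ennreal (L^d) \<le> ennreal (2^d)" using L by (intro ennreal_leI power_mono) auto
  have "hausdorff_measure d ?E5 \<le> ennreal (L^d) * (ennreal (30^d) * hausdorff_measure d (cball ?y (r/3)))"
    using 1 mult_left_mono[OF 2, of "ennreal (L^d)"] by simp
  also have "\<dots> \<le> ennreal (L^d) * (ennreal (30^d) * (ennreal (L^d) * hausdorff_measure d ?Q))"
    by (intro mult_left_mono 3) simp_all
  also have "\<dots> \<le> ennreal (2^d) * (ennreal (30^d) * (ennreal (2^d) * hausdorff_measure d ?Q))"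
    using Ld by (intro mult_mono) auto
  also have "\<dots> = ennreal (2^d * 30^d * 2^d) * hausdorff_measure d ?Q"
    by (simp add: ennreal_mult mult.assoc)
  also have "(2::real)^d * 30^d * 2^d = 120^d" by (simp add: power_mult_distrib[symmetric])
  finally show ?thesis .
qed

end



theorem lemma2:
  fixes A B :: "'p::euclidean_space set"
  assumes "compact A"
    and "hausdorff_measure DIM('d::euclidean_space) A < \<infinity>"
    and "B \<subseteq> A - closure (A_bi_c TYPE('d) A)"
    and "B \<noteq> {}"
    and "openin (top_of_set A) B"
  shows "\<forall>\<epsilon>>0. \<exists>(X :: ('p \<times> real) set) (\<phi> :: 'p \<times> real \<Rightarrow> 'p \<Rightarrow> 'd).
           (\<forall>a\<in>X. \<forall>b\<in>X. a \<noteq> b \<longrightarrow> (cball (fst a) (snd a) \<inter> A) \<inter> (cball (fst b) (snd b) \<inter> A) = {})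
         \<and> hausdorff_measure DIM('d) (B - (\<Union>a\<in>X. cball (fst a) (snd a) \<inter> A)) = 0
         \<and> (\<forall>a\<in>X. fst a \<in> A \<and> 0 < snd a \<and> snd a < \<epsilon>
               \<and> bilipschitz_on (1 + \<epsilon>) (cball (fst a) (snd a) \<inter> A) (\<phi> a)
               \<and> emeasure lebesgue (frontier (\<phi> a ` (cball (fst a) (snd a) \<inter> A))) = 0
               \<and> cball (\<phi> a (fst a)) (snd a / (1 + \<epsilon>)) \<subseteq> \<phi> a ` (cball (fst a) (snd a) \<inter> A))
         \<and> (\<forall>\<gamma>>0. \<exists>F\<subseteq>X. finite F \<and>
               hausdorff_measure DIM('d) (B - (\<Union>a\<in>F. cball (fst a) (snd a) \<inter> A)) < ennreal \<gamma>)"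
proof (intro allI impI)
  fix \<epsilon> :: real assume \<epsilon>: "\<epsilon> > 0"
  let ?d = "DIM('d)"
  let ?H = "hausdorff_measure ?d :: 'p set \<Rightarrow> ennreal"
  have cA: "closed A" using assms(1) compact_imp_closed by blast
  have d0: "?d > 0" by simp
  have hA: "?H A < \<infinity>" using assms(2) by simp
  have BA: "B \<subseteq> A" using assms(3) by blast
  have Bbi: "bi_lipschitz_point TYPE('d) A x" if "x \<in> B" for x
  proof -
    have "x \<in> A" "x \<notin> A_bi_c TYPE('d) A" using that assms(3) closure_subset by blast+
    then show ?thesis unfolding A_bi_c_def A_bi_def by blast
  qed
  define chart where "chart x r \<phi> \<longleftrightarrow> (\<exists>\<delta> L. 1 \<le> L \<and> L < 1+\<epsilon> \<and> L \<le> 2 \<and> 5*r < \<delta> \<and>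
      bilipschitz_on L (ball x \<delta> \<inter> A) \<phi> \<and> open (\<phi> ` (ball x \<delta> \<inter> A)))" for x r and \<phi> :: "'p \<Rightarrow> 'd"
  define good where "good p \<longleftrightarrow> fst p \<in> B \<and> 0 < snd p \<and> snd p < \<epsilon> \<and> snd p \<le> 1 \<and>
      ?H (A \<inter> sphere (fst p) (snd p)) = 0 \<and> (\<exists>\<phi>. chart (fst p) (snd p) \<phi>)" for p
  define K where "K = {p. good p}"
  have fine: "\<exists>r. good (x,r) \<and> r < e" if x: "x \<in> B" and e: "e > 0" for x e
  proof -
    define \<epsilon>' where "\<epsilon>' = min (\<epsilon>/2) 1"
    have "\<epsilon>' > 0" using \<epsilon> by (simp add: \<epsilon>'_def)
    then obtain \<delta> and \<phi> :: "'p \<Rightarrow> 'd" where \<delta>: "\<delta> > 0" "bilipschitz_on (1 + \<epsilon>') (ball x \<delta> \<inter> A) \<phi>"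
        "open (\<phi> ` (ball x \<delta> \<inter> A))"
      using Bbi[OF x] unfolding bi_lipschitz_point_def by blast
    define b where "b = min (min e \<epsilon>) (min 1 (\<delta>/5))"
    have "b > 0" using e \<epsilon> \<delta> by (simp add: b_def)
    then obtain r where r: "0 < r" "r < b" "?H (A \<inter> sphere x r) = 0"
      using sphere_good[OF cA hA d0] by blast
    have e1: "\<epsilon>' \<le> \<epsilon>/2" "\<epsilon>' \<le> 1" by (simp_all add: \<epsilon>'_def)
    have b1: "b \<le> e" "b \<le> \<epsilon>" "b \<le> 1" "b \<le> \<delta>/5" by (simp_all add: b_def)
    have c1: "1 \<le> 1 + \<epsilon>'" using \<open>\<epsilon>' > 0\<close> by simp
    have c2: "1 + \<epsilon>' < 1 + \<epsilon>" using e1 \<epsilon> by linarith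
    have c3: "1 + \<epsilon>' \<le> 2" using e1 by linarith
    have c4: "5 * r < \<delta>" using r b1 by linarith
    have "chart x r \<phi>" unfolding chart_def using c1 c2 c3 c4 \<delta>(2,3) by blast
    moreover have "r < \<epsilon>" "r \<le> 1" "r < e" using r b1 by linarith+
    ultimately have "good (x,r)" using x r unfolding good_def by auto
    then show ?thesis using \<open>r < e\<close> by blast
  qed
  obtain C where C: "countable C" "C \<subseteq> K"
     and pw: "pairwise (\<lambda>i j. disjnt (cball (fst i) (snd i)) (cball (fst j) (snd j))) C"
     and cov: "\<And>i. i \<in> K \<Longrightarrow> \<exists>j. j \<in> C \<and> \<not> disjnt (cball (fst i) (snd i)) (cball (fst j) (snd j)) \<and>
                        cball (fst i) (snd i) \<subseteq> ball (fst j) (5 * snd j)"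
  proof -
    have Kr: "\<And>i. i \<in> K \<Longrightarrow> 0 < snd i \<and> snd i \<le> 1" by (simp add: K_def good_def)
    show ?thesis
      apply (rule Vitali_covering_lemma_cballs_balls[of K snd 1 fst, OF Kr])
       apply assumption
      apply (rule that)
         apply assumption+
      done
  qed
  define \<Phi> where "\<Phi> p = (SOME \<phi>. chart (fst p) (snd p) \<phi>)" for p
  define Q where "Q p = cball (fst p) (snd p) \<inter> A" for p
  have \<Phi>: "chart (fst p) (snd p) (\<Phi> p)" if "p \<in> K" for p
  proof -
    have "good p" using that by (simp add: K_def)
    then have "\<exists>\<phi>. chart (fst p) (snd p) \<phi>" unfolding good_def by blast
    then obtain \<phi> where "chart (fst p) (snd p) \<phi>" by blast
    then show ?thesis unfolding \<Phi>_def by (metis someI)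
  qed
  have props: "fst p \<in> A \<and> 0 < snd p \<and> snd p < \<epsilon>
               \<and> bilipschitz_on (1 + \<epsilon>) (Q p) (\<Phi> p)
               \<and> emeasure lebesgue (frontier (\<Phi> p ` Q p)) = 0
               \<and> cball (\<Phi> p (fst p)) (snd p / (1 + \<epsilon>)) \<subseteq> \<Phi> p ` Q p
               \<and> ?H (cball (fst p) (5 * snd p) \<inter> A) \<le> ennreal (120^?d) * ?H (Q p)" if p: "p \<in> K" for p
  proof -
    obtain x r where xr: "p = (x, r)" by (cases p)
    have Qp: "Q p = cball x r \<inter> A" by (simp add: Q_def xr)
    have g: "x \<in> B" "0 < r" "r < \<epsilon>" "?H (A \<inter> sphere x r) = 0"
      using p xr by (auto simp: K_def good_def)
    have xA: "x \<in> A" using g BA by auto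
    obtain \<delta> L where dl: "1 \<le> L" "L < 1+\<epsilon>" "L \<le> 2" "5*r < \<delta>"
      "bilipschitz_on L (ball x \<delta> \<inter> A) (\<Phi> p)" "open (\<Phi> p ` (ball x \<delta> \<inter> A))"
      using \<Phi>[OF p] xr unfolding chart_def by auto
    note cp = chart_bl[OF cA xA dl(1-3) g(2) dl(4-6)] chart_ball[OF cA xA dl(1-3) g(2) dl(4-6)]
       chart_front[OF cA xA dl(1-3) g(2) dl(4-6)] chart_dbl[OF cA xA dl(1-3) g(2) dl(4-6)]
    have L0: "0 < L" using dl by simp
    have fr: "emeasure lebesgue (frontier (\<Phi> p ` Q p)) = 0"
    proof -
      have sU: "A \<inter> sphere x r \<subseteq> ball x \<delta> \<inter> A" using dl g by auto
      have "hausdorff_measure ?d (\<Phi> p ` (A \<inter> sphere x r)) \<le> ennreal (L^?d) * ?H (A \<inter> sphere x r)"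
      proof (rule H_lip[OF L0])
        show "\<forall>a\<in>A \<inter> sphere x r. \<forall>b\<in>A \<inter> sphere x r. dist (\<Phi> p a) (\<Phi> p b) \<le> L * dist a b"
          using bl_upper[OF dl(5)] sU by blast
      qed
      then have "hausdorff_measure DIM('d) (\<Phi> p ` (A \<inter> sphere x r)) = 0" using g(4) by simp
      then have "negligible (\<Phi> p ` (A \<inter> sphere x r))" by (rule H_null_negligible)
      then have "negligible (frontier (\<Phi> p ` Q p))"
        using cp(3) xr by (auto simp: Q_def intro: negligible_subset)
      then show ?thesis by (simp add: negligible_iff_null_sets null_setsD1)
    qed
    have bc: "cball (\<Phi> p x) (r / (1 + \<epsilon>)) \<subseteq> \<Phi> p ` Q p"
    proof -
      have "r / (1 + \<epsilon>) * L < r / (1 + \<epsilon>) * (1 + \<epsilon>)"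
        using dl g \<epsilon> by (intro mult_strict_left_mono) auto
      also have "\<dots> = r" using \<epsilon> by simp
      finally show ?thesis using cp(2)[of "r / (1 + \<epsilon>)"] g \<epsilon> xr by (auto simp: Q_def)
    qed
    show ?thesis using xA g(2,3) cp(1) cp(4) fr[unfolded Qp] bc[unfolded Qp] unfolding Qp by (simp add: xr)
  qed
  have Qdisj: "Q a \<inter> Q b = {}" if "a \<in> C" "b \<in> C" "a \<noteq> b" for a b
    using pw that unfolding pairwise_def disjnt_def Q_def by blast
  have Qc: "compact (Q p)" for p using cA unfolding Q_def by (intro compact_Int_closed) auto
  have cover: "B - (\<Union>p\<in>F. Q p) \<subseteq> (\<Union>p\<in>C-F. cball (fst p) (5 * snd p) \<inter> A)" if F: "finite F" "F \<subseteq> C" for F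
  proof
    fix z assume z: "z \<in> B - (\<Union>p\<in>F. Q p)"
    then have zA: "z \<in> A" using BA by auto
    define W where "W = (\<Union>p\<in>F. cball (fst p) (snd p))"
    have "closed W" unfolding W_def using F by (intro closed_UN) auto
    moreover have "z \<notin> W" using z zA by (auto simp: W_def Q_def)
    ultimately obtain e where e: "e > 0" "ball z e \<subseteq> - W"
      using open_contains_ball[of "- W"] by (auto simp: open_Compl)
    obtain r where r: "good (z, r)" "r < e" using fine[of z e] z e by auto
    then have zK: "(z, r) \<in> K" by (simp add: K_def)
    obtain j where j: "j \<in> C" "\<not> disjnt (cball z r) (cball (fst j) (snd j))"
        "cball z r \<subseteq> ball (fst j) (5 * snd j)"
      using cov[OF zK] by auto
    have "j \<notin> F"
    proof
      assume "j \<in> F"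
      then have "cball (fst j) (snd j) \<subseteq> W" by (auto simp: W_def)
      moreover have "cball z r \<subseteq> ball z e" using r by (auto simp: subset_eq)
      ultimately show False using j(2) e(2) by (auto simp: disjnt_def)
    qed
    have "0 < r" using r(1) unfolding good_def by simp
    then have "z \<in> cball z r" by simp
    then have "z \<in> ball (fst j) (5 * snd j)" using j(3) by blast
    then have "z \<in> cball (fst j) (5 * snd j) \<inter> A" using zA by simp
    then show "z \<in> (\<Union>p\<in>C-F. cball (fst p) (5 * snd p) \<inter> A)"
      using j(1) \<open>j \<notin> F\<close> by blast
  qed
  have small: "\<exists>F\<subseteq>C. finite F \<and> ?H (B - (\<Union>p\<in>F. Q p)) \<le> ennreal \<eta>" if \<eta>: "\<eta> > 0" for \<eta>
  proof (cases "finite C")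
    case True
    have "B - (\<Union>p\<in>C. Q p) \<subseteq> {}" using cover[OF True order_refl] by simp
    then have e: "B - (\<Union>p\<in>C. Q p) = {}" by blast
    have "?H (B - (\<Union>p\<in>C. Q p)) = 0" unfolding e by (rule H_empty[OF d0])
    then show ?thesis using True by (intro exI[of _ C]) auto
  next
    case False
    define e where "e = from_nat_into C"
    have bij: "bij_betw e UNIV C" unfolding e_def using bij_betw_from_nat_into[OF C(1) False] .
    then have eC: "e n \<in> C" for n by (auto simp: bij_betw_def)
    have einj: "inj e" using bij by (auto simp: bij_betw_def)
    define m where "m n = ?H (Q (e n))" for n
    have part: "(\<Sum>n<N. m n) \<le> ?H A" for N
    proof -
      have "(\<Sum>n<N. m n) \<le> ?H (\<Union>n<N. Q (e n))"
        unfolding m_def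
      proof (rule H_finite_disj[OF d0])
        show "\<And>i j. i \<in> {..<N} \<Longrightarrow> j \<in> {..<N} \<Longrightarrow> i \<noteq> j \<Longrightarrow> Q (e i) \<inter> Q (e j) = {}"
          using Qdisj[OF eC eC] einj by (meson injD)
      qed (use Qc in auto)
      also have "\<dots> \<le> ?H A" by (rule H_mono) (auto simp: Q_def)
      finally show ?thesis .
    qed
    have mfin: "m n \<noteq> top" for n
    proof -
      have "m n \<le> ?H A" unfolding m_def by (rule H_mono) (auto simp: Q_def)
      then show ?thesis using hA by (auto simp: top_unique)
    qed
    define mr where "mr n = enn2real (m n)" for n
    have mmr: "m n = ennreal (mr n)" for n using mfin[of n] unfolding mr_def by (simp add: top.not_eq_extremum)
    have "(\<Sum>n. m n) \<le> ?H A" by (rule suminf_le_const[OF summableI part])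
    then have "(\<Sum>n. ennreal (mr n)) \<noteq> top" using hA mmr by (auto simp: top_unique)
    then have summ: "summable mr" by (intro summable_suminf_not_top) (auto simp: mr_def)
    define c :: real where "c = 120 ^ ?d"
    have c: "c > 0" by (simp add: c_def)
    obtain N where N: "norm (\<Sum>i. mr (i + N)) < \<eta> / c"
      using suminf_exist_split[OF _ summ, of "\<eta> / c"] \<eta> c by auto
    define F where "F = e ` {..<N}"
    have F: "finite F" "F \<subseteq> C" using eC by (auto simp: F_def)
    have CF: "C - F \<subseteq> range (\<lambda>i. e (i + N))"
    proof
      fix p assume p: "p \<in> C - F"
      then obtain n where n: "p = e n" using bij by (auto simp: bij_betw_def)
      then have "N \<le> n" using p by (auto simp: F_def)
      then have "p = e ((n - N) + N)" using n by simp
      then show "p \<in> range (\<lambda>i. e (i + N))" by blast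
    qed
    have "?H (B - (\<Union>p\<in>F. Q p)) \<le> ?H (\<Union>i. cball (fst (e (i + N))) (5 * snd (e (i + N))) \<inter> A)"
      using cover[OF F] CF by (intro H_mono) blast
    also have "\<dots> \<le> (\<Sum>i. ?H (cball (fst (e (i + N))) (5 * snd (e (i + N))) \<inter> A))"
      by (rule H_subadd)
    also have "\<dots> \<le> (\<Sum>i. ennreal c * ennreal (mr (i + N)))"
    proof (intro suminf_le allI)
      fix i
      have "e (i + N) \<in> K" using eC C(2) by blast
      then have "?H (cball (fst (e (i + N))) (5 * snd (e (i + N))) \<inter> A) \<le> ennreal (120^?d) * ?H (Q (e (i + N)))"
        using props by blast
      moreover have "?H (Q (e (i + N))) = ennreal (mr (i + N))" using mmr[of "i + N"] by (simp add: m_def)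
      ultimately show "?H (cball (fst (e (i + N))) (5 * snd (e (i + N))) \<inter> A) \<le> ennreal c * ennreal (mr (i + N))"
        by (simp add: c_def)
    qed auto
    also have "\<dots> = ennreal c * ennreal (\<Sum>i. mr (i + N))"
      using summable_ignore_initial_segment[OF summ]
      by (simp add: suminf_ennreal2 mr_def)
    also have "\<dots> \<le> ennreal c * ennreal (\<eta> / c)"
      using N by (intro mult_left_mono ennreal_leI) auto
    also have "\<dots> = ennreal \<eta>" using c \<eta> by (simp add: ennreal_mult[symmetric])
    finally show ?thesis using F by blast
  qed
  show "\<exists>(X :: ('p \<times> real) set) (\<phi> :: 'p \<times> real \<Rightarrow> 'p \<Rightarrow> 'd).
           (\<forall>a\<in>X. \<forall>b\<in>X. a \<noteq> b \<longrightarrow> (cball (fst a) (snd a) \<inter> A) \<inter> (cball (fst b) (snd b) \<inter> A) = {})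
         \<and> hausdorff_measure DIM('d) (B - (\<Union>a\<in>X. cball (fst a) (snd a) \<inter> A)) = 0
         \<and> (\<forall>a\<in>X. fst a \<in> A \<and> 0 < snd a \<and> snd a < \<epsilon>
               \<and> bilipschitz_on (1 + \<epsilon>) (cball (fst a) (snd a) \<inter> A) (\<phi> a)
               \<and> emeasure lebesgue (frontier (\<phi> a ` (cball (fst a) (snd a) \<inter> A))) = 0
               \<and> cball (\<phi> a (fst a)) (snd a / (1 + \<epsilon>)) \<subseteq> \<phi> a ` (cball (fst a) (snd a) \<inter> A))
         \<and> (\<forall>\<gamma>>0. \<exists>F\<subseteq>X. finite F \<and>
               hausdorff_measure DIM('d) (B - (\<Union>a\<in>F. cball (fst a) (snd a) \<inter> A)) < ennreal \<gamma>)"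
  proof (intro exI[of _ C] exI[of _ \<Phi>] conjI)
    show "\<forall>a\<in>C. \<forall>b\<in>C. a \<noteq> b \<longrightarrow> (cball (fst a) (snd a) \<inter> A) \<inter> (cball (fst b) (snd b) \<inter> A) = {}"
    proof (intro ballI impI)
      fix a b assume "a \<in> C" "b \<in> C" "a \<noteq> b"
      from Qdisj[OF this] show "(cball (fst a) (snd a) \<inter> A) \<inter> (cball (fst b) (snd b) \<inter> A) = {}"
        unfolding Q_def .
    qed
    show "\<forall>a\<in>C. fst a \<in> A \<and> 0 < snd a \<and> snd a < \<epsilon>
               \<and> bilipschitz_on (1 + \<epsilon>) (cball (fst a) (snd a) \<inter> A) (\<Phi> a)
               \<and> emeasure lebesgue (frontier (\<Phi> a ` (cball (fst a) (snd a) \<inter> A))) = 0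
               \<and> cball (\<Phi> a (fst a)) (snd a / (1 + \<epsilon>)) \<subseteq> \<Phi> a ` (cball (fst a) (snd a) \<inter> A)"
    proof (intro ballI)
      fix a assume "a \<in> C"
      then have "a \<in> K" using C(2) by blast
      from props[OF this] show "fst a \<in> A \<and> 0 < snd a \<and> snd a < \<epsilon>
               \<and> bilipschitz_on (1 + \<epsilon>) (cball (fst a) (snd a) \<inter> A) (\<Phi> a)
               \<and> emeasure lebesgue (frontier (\<Phi> a ` (cball (fst a) (snd a) \<inter> A))) = 0
               \<and> cball (\<Phi> a (fst a)) (snd a / (1 + \<epsilon>)) \<subseteq> \<Phi> a ` (cball (fst a) (snd a) \<inter> A)"
        by (simp add: Q_def)
    qed
    show "\<forall>\<gamma>>0. \<exists>F\<subseteq>C. finite F \<and>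
               hausdorff_measure DIM('d) (B - (\<Union>a\<in>F. cball (fst a) (snd a) \<inter> A)) < ennreal \<gamma>"
    proof (intro allI impI)
      fix \<gamma> :: real assume "\<gamma> > 0"
      then have "\<gamma>/2 > 0" by simp
      then obtain F where F: "F \<subseteq> C" "finite F" "?H (B - (\<Union>p\<in>F. Q p)) \<le> ennreal (\<gamma>/2)"
        using small by blast
      have lt: "ennreal (\<gamma>/2) < ennreal \<gamma>" using \<open>\<gamma>>0\<close> by (simp add: ennreal_less_iff)
      have "?H (B - (\<Union>p\<in>F. Q p)) < ennreal \<gamma>" by (rule le_less_trans[OF F(3) lt])
      then have "hausdorff_measure DIM('d) (B - (\<Union>a\<in>F. cball (fst a) (snd a) \<inter> A)) < ennreal \<gamma>"
        unfolding Q_def .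
      then show "\<exists>F\<subseteq>C. finite F \<and>
               hausdorff_measure DIM('d) (B - (\<Union>a\<in>F. cball (fst a) (snd a) \<inter> A)) < ennreal \<gamma>"
        using F(1,2) by blast
    qed
    show "hausdorff_measure DIM('d) (B - (\<Union>a\<in>C. cball (fst a) (snd a) \<inter> A)) = 0"
    proof -
      have bnd: "?H (B - (\<Union>p\<in>C. Q p)) \<le> ennreal \<eta>" if \<eta>pos: "\<eta> > 0" for \<eta>
      proof -
        obtain F where F: "F \<subseteq> C" "finite F" "?H (B - (\<Union>p\<in>F. Q p)) \<le> ennreal \<eta>"
          using small[OF \<eta>pos] by auto
        have "?H (B - (\<Union>p\<in>C. Q p)) \<le> ?H (B - (\<Union>p\<in>F. Q p))" using F(1) by (intro H_mono) blast
        then show ?thesis using F(3) by (rule order_trans)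
      qed
      have "?H (B - (\<Union>p\<in>C. Q p)) \<le> 0"
      proof (rule ennreal_le_epsilon)
        fix e :: real assume "0 < e"
        then show "?H (B - (\<Union>p\<in>C. Q p)) \<le> 0 + ennreal e" using bnd[of e] by simp
      qed
      then have "?H (B - (\<Union>p\<in>C. Q p)) = 0" by simp
      then show ?thesis unfolding Q_def .
    qed
  qed
qed

end
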